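(* Consider two spiking layers $\hat\sigma$ and $\tilde\sigma$, each of width $N$ (same threshold $u_{th}$, reset $V_{reset}$, decay $\beta\in(0,1)$, applied coordinatewise), with the same initial temporal input vector $\tilde{\boldsymbol h}^0=\hat{\boldsymbol h}^0$, receiving spatial input feature vectors $\hat{\boldsymbol x}^t,\tilde{\boldsymbol x}^t\in\mathbb{R}^N$, $t=1,\dots,T$. Suppose each coordinate of $\hat{\boldsymbol u}^t=\hat{\boldsymbol h}^{t-1}+\hat{\boldsymbol x}^t$ is a random variable following a $u_{th}$-Neighborhood-Finite Distribution, that $|\tilde x^t_k-\hat x^t_k|\le\epsilon$ for all $k=1,\dots,N$ and $t=1,\dots,T$, and that $\hat\sigma^t(\hat{\boldsymbol x}^t)=\tilde\sigma^t(\tilde{\boldsymbol x}^t)$ for $t=1,\dots,T-1$. Then $P[\hat\sigma^T(\hat{\boldsymbol x}^T)\neq\tilde\sigma^T(\tilde{\boldsymbol x}^T)]$ has an upper bound proportional to $N\frac{\epsilon}{1-\beta}$ (i.e. it is at most a constant multiple of $N\frac{\epsilon}{1-\beta}$, the constant depending only on the distributions of the coordinates of $\hat{\boldsymbol u}^T$).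
   Context: A LIF spiking neuron with firing threshold $u_{th}$, reset potential $V_{reset}$ and decay factor $\beta\in(0,1)$ receives spatial input features $x^1,x^2,\dots$ and evolves by $u^t=h^{t-1}+x^t$, $s^t=\mathrm{Hea}(u^t-u_{th})$, $h^t=V_{reset}s^t+\beta u^t(1-s^t)$, where $\mathrm{Hea}(y)=1$ if $y\ge0$ and $0$ otherwise; the output at timestep $t$ is $\sigma^t(x^t)=s^t$. A spiking layer of width $N$ consists of $N$ such neurons acting independently on the coordinates of a vector input. A probability density $p$ is an $m$-Neighborhood-Finite Distribution if there exists $\epsilon>0$ with $\sup_{x\in[m-\epsilon,m+\epsilon]}p(x)<+\infty$. *)

theory Defs
  imports "HOL-Probability.Probability"
begin

definition hea :: "real \<Rightarrow> real" where
  "hea y = (if y \<ge> 0 then 1 else 0)"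

text \<open>Temporal state h^t of a single LIF neuron with threshold uth, reset vr, decay beta,
  initial temporal input h0 and spatial inputs x 1, x 2, ... (x 0 unused).\<close>
fun lif_h :: "real \<Rightarrow> real \<Rightarrow> real \<Rightarrow> real \<Rightarrow> (nat \<Rightarrow> real) \<Rightarrow> nat \<Rightarrow> real" where
  "lif_h uth vr beta h0 x 0 = h0"
| "lif_h uth vr beta h0 x (Suc t) =
     (let u = lif_h uth vr beta h0 x t + x (Suc t); s = hea (u - uth)
      in vr * s + beta * u * (1 - s))"

definition lif_u :: "real \<Rightarrow> real \<Rightarrow> real \<Rightarrow> real \<Rightarrow> (nat \<Rightarrow> real) \<Rightarrow> nat \<Rightarrow> real" where
  "lif_u uth vr beta h0 x t = lif_h uth vr beta h0 x (t - 1) + x t"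

definition lif_s :: "real \<Rightarrow> real \<Rightarrow> real \<Rightarrow> real \<Rightarrow> (nat \<Rightarrow> real) \<Rightarrow> nat \<Rightarrow> real" where
  "lif_s uth vr beta h0 x t = hea (lif_u uth vr beta h0 x t - uth)"

definition NFD :: "real \<Rightarrow> (real \<Rightarrow> real) \<Rightarrow> bool" where
  "NFD m p \<longleftrightarrow> p \<in> borel_measurable borel \<and> (\<forall>x. 0 \<le> p x)
     \<and> (\<integral>\<^sup>+ x. ennreal (p x) \<partial>lborel) = 1
     \<and> (\<exists>e>0. bdd_above (p ` {m - e .. m + e}))"

end

theory Submission
  imports Defs
begin

lemma dh_bound:
  assumes b0: "0 < beta" and b1: "beta < 1" and e0: "0 \<le> eps"
    and X: "\<forall>t\<in>{1..T}. \<bar>xt t - xh t\<bar> \<le> eps"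
    and S: "\<forall>t\<in>{1..<T}. lif_s uth vr beta h0 xh t = lif_s uth vr beta h0 xt t"
  shows "n < T \<Longrightarrow> \<bar>lif_h uth vr beta h0 xt n - lif_h uth vr beta h0 xh n\<bar> \<le> eps*beta/(1-beta)"
proof (induction n)
  case 0
  then show ?case using b0 b1 e0 by simp
next
  case (Suc n)
  define uh where "uh = lif_h uth vr beta h0 xh n + xh (Suc n)"
  define ut where "ut = lif_h uth vr beta h0 xt n + xt (Suc n)"
  have IH: "\<bar>lif_h uth vr beta h0 xt n - lif_h uth vr beta h0 xh n\<bar> \<le> eps*beta/(1-beta)"
    using Suc by simp
  have xe: "\<bar>xt (Suc n) - xh (Suc n)\<bar> \<le> eps" using X Suc.prems by simp
  have du: "\<bar>ut - uh\<bar> \<le> eps*beta/(1-beta) + eps" using IH xe unfolding ut_def uh_def by linarith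
  have heq: "hea (uh - uth) = hea (ut - uth)"
  proof -
    have "Suc n \<in> {1..<T}" using Suc.prems by simp
    then have "lif_s uth vr beta h0 xh (Suc n) = lif_s uth vr beta h0 xt (Suc n)" using S by blast
    then show ?thesis unfolding lif_s_def lif_u_def uh_def ut_def by simp
  qed
  have hh: "lif_h uth vr beta h0 xh (Suc n) = vr * hea (uh - uth) + beta * uh * (1 - hea (uh - uth))"
    unfolding uh_def by (simp add: Let_def)
  have ht: "lif_h uth vr beta h0 xt (Suc n) = vr * hea (ut - uth) + beta * ut * (1 - hea (ut - uth))"
    unfolding ut_def by (simp add: Let_def)
  show ?case
  proof (cases "uh \<ge> uth")
    case True
    then have "hea (uh - uth) = 1" by (simp add: hea_def)
    then show ?thesis using hh ht heq b0 b1 e0 by simp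
  next
    case False
    then have h0': "hea (uh - uth) = 0" by (simp add: hea_def)
    then have "lif_h uth vr beta h0 xt (Suc n) - lif_h uth vr beta h0 xh (Suc n) = beta * (ut - uh)"
    proof -
      have "hea (ut - uth) = 0" using h0' heq by simp
      then show ?thesis unfolding hh ht using h0' by (simp add: algebra_simps)
    qed
    then have "\<bar>lif_h uth vr beta h0 xt (Suc n) - lif_h uth vr beta h0 xh (Suc n)\<bar> = beta * \<bar>ut - uh\<bar>"
      using b0 by (simp add: abs_mult)
    also have "\<dots> \<le> beta * (eps*beta/(1-beta) + eps)" using du b0 by (simp add: mult_left_mono)
    also have "\<dots> = eps*beta/(1-beta)" using b1 by (simp add: field_simps)
    finally show ?thesis .
  qed
qed

lemma du_bound:
  assumes b0: "0 < beta" and b1: "beta < 1" and e0: "0 \<le> eps" and T1: "1 \<le> T"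
    and X: "\<forall>t\<in>{1..T}. \<bar>xt t - xh t\<bar> \<le> eps"
    and S: "\<forall>t\<in>{1..<T}. lif_s uth vr beta h0 xh t = lif_s uth vr beta h0 xt t"
    and D: "lif_s uth vr beta h0 xh T \<noteq> lif_s uth vr beta h0 xt T"
  shows "lif_u uth vr beta h0 xh T \<in> {uth - eps/(1-beta) .. uth + eps/(1-beta)}"
proof -
  have "\<bar>lif_h uth vr beta h0 xt (T-1) - lif_h uth vr beta h0 xh (T-1)\<bar> \<le> eps*beta/(1-beta)"
    using dh_bound[OF b0 b1 e0 X S] T1 by simp
  moreover have "\<bar>xt T - xh T\<bar> \<le> eps" using X T1 by simp
  moreover have "eps*beta/(1-beta) + eps = eps/(1-beta)" using b1 by (simp add: field_simps)
  ultimately have du: "\<bar>lif_u uth vr beta h0 xt T - lif_u uth vr beta h0 xh T\<bar> \<le> eps/(1-beta)"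
    unfolding lif_u_def by linarith
  show ?thesis
  proof (cases "lif_u uth vr beta h0 xh T \<ge> uth")
    case True
    then have "lif_u uth vr beta h0 xt T < uth" using D unfolding lif_s_def hea_def by (auto split: if_splits)
    then show ?thesis using True du by auto
  next
    case False
    then have "lif_u uth vr beta h0 xt T \<ge> uth" using D unfolding lif_s_def hea_def by (auto split: if_splits)
    then show ?thesis using False du by auto
  qed
qed

lemma prob_bound:
  fixes X :: "'a \<Rightarrow> real"
  assumes P: "prob_space M" and D: "distributed M lborel X (\<lambda>x. ennreal (f x))"
    and e: "e > 0" and B: "\<forall>x\<in>{m-e..m+e}. f x \<le> B" and d: "0 \<le> d"
  shows "measure M (X -` {m-d..m+d} \<inter> space M) \<le> (2*\<bar>B\<bar> + 1/e) * d"
proof -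
  interpret prob_space M by fact
  have Xm: "X \<in> measurable M lborel" using distributed_measurable[OF D] .
  show ?thesis
  proof (cases "e \<le> d")
    case True
    have "measure M (X -` {m-d..m+d} \<inter> space M) \<le> 1" by (rule prob_le_1)
    also have "1 \<le> d / e" using True e by simp
    also have "\<dots> \<le> (2*\<bar>B\<bar> + 1/e) * d" using d e by (simp add: field_simps)
    finally show ?thesis .
  next
    case False
    let ?A = "{m-d..m+d}"
    have fm: "(\<lambda>x. ennreal (f x)) \<in> borel_measurable lborel"
      using distributed_borel_measurable[OF D] by simp
    have "emeasure M (X -` ?A \<inter> space M) = emeasure (distr M lborel X) ?A"
      by (rule emeasure_distr[OF Xm, symmetric]) simp
    also have "\<dots> = emeasure (density lborel (\<lambda>x. ennreal (f x))) ?A"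
      using distributed_distr_eq_density[OF D] by simp
    also have "\<dots> = (\<integral>\<^sup>+ x. ennreal (f x) * indicator ?A x \<partial>lborel)"
      by (rule emeasure_density[OF fm]) simp
    also have "\<dots> \<le> (\<integral>\<^sup>+ x. ennreal \<bar>B\<bar> * indicator ?A x \<partial>lborel)"
    proof (rule nn_integral_mono)
      fix x
      show "ennreal (f x) * indicator ?A x \<le> ennreal \<bar>B\<bar> * indicator ?A x"
      proof (cases "x \<in> ?A")
        case True
        then have "x \<in> {m-e..m+e}" using False by auto
        then have "f x \<le> \<bar>B\<bar>" using B by force
        then show ?thesis using True by (simp add: ennreal_leI)
      qed simp
    qed
    also have "\<dots> = ennreal \<bar>B\<bar> * emeasure lborel ?A"
      by (rule nn_integral_cmult_indicator) simp
    also have "\<dots> = ennreal (2*\<bar>B\<bar>*d)" using d by (simp add: ennreal_mult[symmetric])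
    finally have "ennreal (measure M (X -` ?A \<inter> space M)) \<le> ennreal (2*\<bar>B\<bar>*d)"
      by (simp add: emeasure_eq_measure)
    then have "measure M (X -` ?A \<inter> space M) \<le> 2*\<bar>B\<bar>*d"
      using d by (simp add: ennreal_le_iff)
    also have "\<dots> \<le> (2*\<bar>B\<bar> + 1/e) * d" using d e by (simp add: field_simps)
    finally show ?thesis .
  qed
qed

theorem theorem1:
  fixes uth :: real and N :: nat and p :: "nat \<Rightarrow> real \<Rightarrow> real"
  assumes "\<forall>k<N. NFD uth (p k)"
  shows "\<exists>C::real. \<forall>(M::'a measure) vr beta T eps
            (h0 :: 'a \<Rightarrow> nat \<Rightarrow> real) (Xh :: 'a \<Rightarrow> nat \<Rightarrow> nat \<Rightarrow> real) (Xt :: 'a \<Rightarrow> nat \<Rightarrow> nat \<Rightarrow> real).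
     prob_space M \<and> 0 < beta \<and> beta < 1 \<and> 1 \<le> T
     \<and> (\<forall>k. (\<lambda>\<omega>. h0 \<omega> k) \<in> borel_measurable M)
     \<and> (\<forall>t k. (\<lambda>\<omega>. Xh \<omega> t k) \<in> borel_measurable M)
     \<and> (\<forall>t k. (\<lambda>\<omega>. Xt \<omega> t k) \<in> borel_measurable M)
     \<and> (\<forall>t\<in>{1..<T}. \<forall>k<N. \<exists>q. NFD uth q \<and>
          distributed M lborel (\<lambda>\<omega>. lif_u uth vr beta (h0 \<omega> k) (\<lambda>s. Xh \<omega> s k) t)
            (\<lambda>x. ennreal (q x)))
     \<and> (\<forall>k<N. distributed M lborel (\<lambda>\<omega>. lif_u uth vr beta (h0 \<omega> k) (\<lambda>s. Xh \<omega> s k) T)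
            (\<lambda>x. ennreal (p k x)))
     \<and> (\<forall>\<omega>\<in>space M. \<forall>t\<in>{1..T}. \<forall>k<N. \<bar>Xt \<omega> t k - Xh \<omega> t k\<bar> \<le> eps)
     \<and> (\<forall>\<omega>\<in>space M. \<forall>t\<in>{1..<T}. \<forall>k<N.
          lif_s uth vr beta (h0 \<omega> k) (\<lambda>s. Xh \<omega> s k) t
          = lif_s uth vr beta (h0 \<omega> k) (\<lambda>s. Xt \<omega> s k) t)
     \<longrightarrow> measure M {\<omega>\<in>space M. \<exists>k<N.
            lif_s uth vr beta (h0 \<omega> k) (\<lambda>s. Xh \<omega> s k) T
            \<noteq> lif_s uth vr beta (h0 \<omega> k) (\<lambda>s. Xt \<omega> s k) T}
         \<le> C * real N * (eps / (1 - beta))"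
proof -
  have "\<forall>k\<in>{..<N}. \<exists>eB::real\<times>real. fst eB > 0 \<and> (\<forall>x\<in>{uth - fst eB..uth + fst eB}. p k x \<le> snd eB)"
  proof
    fix k assume "k \<in> {..<N}"
    then have "k < N" by simp
    then have "NFD uth (p k)" using assms by simp
    then have "\<exists>e>0. bdd_above (p k ` {uth - e .. uth + e})"
      unfolding NFD_def by (elim conjE)
    then obtain e where e: "e > 0" "bdd_above (p k ` {uth - e .. uth + e})"
      by blast
    have "\<exists>B. \<forall>y\<in>p k ` {uth - e .. uth + e}. y \<le> B" using e(2) by (simp only: bdd_above_def)
    then obtain B where "\<forall>y\<in>p k ` {uth - e .. uth + e}. y \<le> B" by blast
    then have "\<forall>x\<in>{uth - e .. uth + e}. p k x \<le> B" by blast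
    then show "\<exists>eB::real\<times>real. fst eB > 0 \<and> (\<forall>x\<in>{uth - fst eB..uth + fst eB}. p k x \<le> snd eB)"
      using e by (intro exI[of _ "(e, B)"]) auto
  qed
  from bchoice[OF this] obtain F where F: "\<forall>k\<in>{..<N}. fst (F k) > 0 \<and> (\<forall>x\<in>{uth - fst (F k)..uth + fst (F k)}. p k x \<le> snd (F k))"
    by blast
  define C where "C = (\<Sum>k<N. 2*\<bar>snd (F k)\<bar> + 1/fst (F k))"
  have C0: "0 \<le> C" unfolding C_def
  proof (rule sum_nonneg)
    fix k assume "k \<in> {..<N}"
    then have "0 < fst (F k)" using F by blast
    then show "0 \<le> 2 * \<bar>snd (F k)\<bar> + 1 / fst (F k)" by simp
  qed
  show ?thesis
  proof (rule exI[of _ C], intro allI impI)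
    fix M :: "'a measure" and vr beta T eps h0 Xh Xt
    assume H: "prob_space M \<and> 0 < beta \<and> beta < 1 \<and> 1 \<le> T
     \<and> (\<forall>k. (\<lambda>\<omega>. h0 \<omega> k) \<in> borel_measurable M)
     \<and> (\<forall>t k. (\<lambda>\<omega>. Xh \<omega> t k) \<in> borel_measurable M)
     \<and> (\<forall>t k. (\<lambda>\<omega>. Xt \<omega> t k) \<in> borel_measurable M)
     \<and> (\<forall>t\<in>{1..<T}. \<forall>k<N. \<exists>q. NFD uth q \<and>
          distributed M lborel (\<lambda>\<omega>. lif_u uth vr beta (h0 \<omega> k) (\<lambda>s. Xh \<omega> s k) t)
            (\<lambda>x. ennreal (q x)))
     \<and> (\<forall>k<N. distributed M lborel (\<lambda>\<omega>. lif_u uth vr beta (h0 \<omega> k) (\<lambda>s. Xh \<omega> s k) T)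
            (\<lambda>x. ennreal (p k x)))
     \<and> (\<forall>\<omega>\<in>space M. \<forall>t\<in>{1..T}. \<forall>k<N. \<bar>Xt \<omega> t k - Xh \<omega> t k\<bar> \<le> eps)
     \<and> (\<forall>\<omega>\<in>space M. \<forall>t\<in>{1..<T}. \<forall>k<N.
          lif_s uth vr beta (h0 \<omega> k) (\<lambda>s. Xh \<omega> s k) t
          = lif_s uth vr beta (h0 \<omega> k) (\<lambda>s. Xt \<omega> s k) t)"
    then have P: "prob_space M" and b0: "0 < beta" and b1: "beta < 1" and T1: "1 \<le> T"
      and D: "\<forall>k<N. distributed M lborel (\<lambda>\<omega>. lif_u uth vr beta (h0 \<omega> k) (\<lambda>s. Xh \<omega> s k) T)
            (\<lambda>x. ennreal (p k x))"
      and X: "\<forall>\<omega>\<in>space M. \<forall>t\<in>{1..T}. \<forall>k<N. \<bar>Xt \<omega> t k - Xh \<omega> t k\<bar> \<le> eps"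
      and S: "\<forall>\<omega>\<in>space M. \<forall>t\<in>{1..<T}. \<forall>k<N.
          lif_s uth vr beta (h0 \<omega> k) (\<lambda>s. Xh \<omega> s k) t
          = lif_s uth vr beta (h0 \<omega> k) (\<lambda>s. Xt \<omega> s k) t"
      by blast+
    interpret prob_space M by (fact P)
    define d where "d = eps / (1 - beta)"
    define U where "U k \<omega> = lif_u uth vr beta (h0 \<omega> k) (\<lambda>s. Xh \<omega> s k) T" for k \<omega>
    define A where "A = {\<omega>\<in>space M. \<exists>k<N.
            lif_s uth vr beta (h0 \<omega> k) (\<lambda>s. Xh \<omega> s k) T
            \<noteq> lif_s uth vr beta (h0 \<omega> k) (\<lambda>s. Xt \<omega> s k) T}"
    have "measure M A \<le> C * real N * d"
    proof (cases "N = 0")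
      case True
      then show ?thesis unfolding A_def by simp
    next
      case False
      obtain \<omega>0 where w0: "\<omega>0 \<in> space M" using not_empty by blast
      have e0: "0 \<le> eps" using X w0 T1 False
        by (metis (no_types, lifting) abs_ge_zero atLeastAtMost_iff le_numeral_extra(4) neq0_conv order_trans)
      have d0: "0 \<le> d" unfolding d_def using e0 b1 by simp
      define Sk where "Sk k = U k -` {uth - d .. uth + d} \<inter> space M" for k
      have Sm: "Sk k \<in> sets M" if "k < N" for k
      proof -
        have "U k \<in> measurable M lborel" unfolding U_def using distributed_measurable D that by blast
        then show ?thesis unfolding Sk_def by (rule measurable_sets) simp
      qed
      have sub: "A \<subseteq> (\<Union>k\<in>{..<N}. Sk k)"
      proof
        fix \<omega> assume "\<omega> \<in> A"
        then obtain k where k: "k < N" "\<omega> \<in> space M"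
          "lif_s uth vr beta (h0 \<omega> k) (\<lambda>s. Xh \<omega> s k) T
            \<noteq> lif_s uth vr beta (h0 \<omega> k) (\<lambda>s. Xt \<omega> s k) T"
          unfolding A_def by blast
        have "U k \<omega> \<in> {uth - d .. uth + d}"
          unfolding U_def d_def
          by (rule du_bound[OF b0 b1 e0 T1 _ _ k(3)]) (use X S k in auto)
        then show "\<omega> \<in> (\<Union>k\<in>{..<N}. Sk k)" using k unfolding Sk_def by auto
      qed
      have "measure M A \<le> measure M (\<Union>k\<in>{..<N}. Sk k)"
        by (rule finite_measure_mono[OF sub]) (use Sm in auto)
      also have "\<dots> \<le> (\<Sum>k<N. measure M (Sk k))"
        by (rule measure_UNION_le) (use Sm in auto)
      also have "\<dots> \<le> (\<Sum>k<N. (2*\<bar>snd (F k)\<bar> + 1/fst (F k)) * d)"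
      proof (rule sum_mono)
        fix k assume "k \<in> {..<N}"
        then have k: "k < N" by simp
        show "measure M (Sk k) \<le> (2*\<bar>snd (F k)\<bar> + 1/fst (F k)) * d"
          unfolding Sk_def U_def
          by (rule prob_bound[OF P]) (use D F k d0 in auto)
      qed
      also have "\<dots> = C * d" unfolding C_def by (simp add: sum_distrib_right)
      also have "\<dots> \<le> C * real N * d"
      proof -
        have "1 \<le> real N" using False by simp
        then have "C * d * 1 \<le> C * d * real N" using C0 d0 by (intro mult_left_mono) auto
        then show ?thesis by (simp add: mult_ac)
      qed
      finally show ?thesis .
    qed
    then show "measure M {\<omega>\<in>space M. \<exists>k<N.
            lif_s uth vr beta (h0 \<omega> k) (\<lambda>s. Xh \<omega> s k) T
            \<noteq> lif_s uth vr beta (h0 \<omega> k) (\<lambda>s. Xt \<omega> s k) T}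
         \<le> C * real N * (eps / (1 - beta))" unfolding A_def d_def .
  qed
qed

end
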